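(* Let $X$ be a shift space over a finite alphabet. If $X$ has the almost specification property, then $X$ is both boundedly supermultiplicative and balanced.
   Context: For a shift space $X\subseteq\mathcal{A}^{\mathbb{Z}}$ ($\mathcal{A}$ finite), $\mathcal{B}_n(X)$ denotes the set of words of length $n$ appearing in points of $X$, and $\mathcal{B}(X)=\bigcup_{n\ge1}\mathcal{B}_n(X)$. For $\omega\in\mathcal{B}(X)$ and $r\in\mathbb{N}$, $\mathcal{B}_{\omega,r}(X)$ is the set of words $u$ of length $r$ such that $\omega u\in\mathcal{B}(X)$. $X$ has the almost specification property if there is $N\ge1$ such that for all $u,v\in\mathcal{B}(X)$ there exists $w\in\mathcal{B}(X)$ with $|w|\le N$ and $uwv\in\mathcal{B}(X)$. $X$ is boundedly supermultiplicative if there is $K\ge1$ with $|\mathcal{B}_m(X)|\cdot|\mathcal{B}_n(X)|\le K|\mathcal{B}_{m+n}(X)|$ for all $m,n\ge1$. $X$ is balanced if there is $B>0$ such that $|\mathcal{B}_{\omega,r}(X)|/|\mathcal{B}_r(X)|\ge B$ for every $\omega\in\mathcal{B}(X)$ and every $r\in\mathbb{N}$. *)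

theory Defs
  imports Complex_Main
begin

text \<open>Points of the full shift over a finite alphabet 'a are maps int => 'a.\<close>

definition shift :: "(int \<Rightarrow> 'a) \<Rightarrow> (int \<Rightarrow> 'a)" where
  "shift x = (\<lambda>i. x (i + 1))"

text \<open>Closedness in the product topology, written out: a point all of whose
  central finite windows agree with points of X lies in X.\<close>
definition shift_space :: "(int \<Rightarrow> 'a::finite) set \<Rightarrow> bool" where
  "shift_space X \<longleftrightarrow>
     (\<forall>x. x \<in> X \<longleftrightarrow> shift x \<in> X) \<and>
     (\<forall>x. (\<forall>n::nat. \<exists>y\<in>X. \<forall>i. \<bar>i\<bar> \<le> int n \<longrightarrow> y i = x i) \<longrightarrow> x \<in> X)"

definition window :: "(int \<Rightarrow> 'a) \<Rightarrow> int \<Rightarrow> nat \<Rightarrow> 'a list" where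
  "window x i n = map (\<lambda>j. x (i + int j)) [0..<n]"

definition lang_n :: "(int \<Rightarrow> 'a) set \<Rightarrow> nat \<Rightarrow> 'a list set" where
  "lang_n X n = {w. \<exists>x\<in>X. \<exists>i. w = window x i n}"

definition lang :: "(int \<Rightarrow> 'a) set \<Rightarrow> 'a list set" where
  "lang X = (\<Union>n\<in>{1..}. lang_n X n)"

definition follower :: "(int \<Rightarrow> 'a) set \<Rightarrow> 'a list \<Rightarrow> nat \<Rightarrow> 'a list set" where
  "follower X \<omega> r = {u. length u = r \<and> \<omega> @ u \<in> lang X}"

definition almost_specification :: "(int \<Rightarrow> 'a) set \<Rightarrow> bool" where
  "almost_specification X \<longleftrightarrow>
     (\<exists>N::nat. N \<ge> 1 \<and> (\<forall>u\<in>lang X. \<forall>v\<in>lang X.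
        \<exists>w\<in>lang X. length w \<le> N \<and> u @ w @ v \<in> lang X))"

definition boundedly_supermultiplicative :: "(int \<Rightarrow> 'a) set \<Rightarrow> bool" where
  "boundedly_supermultiplicative X \<longleftrightarrow>
     (\<exists>K::real. K \<ge> 1 \<and> (\<forall>m n. m \<ge> 1 \<longrightarrow> n \<ge> 1 \<longrightarrow>
        real (card (lang_n X m)) * real (card (lang_n X n)) \<le> K * real (card (lang_n X (m + n)))))"

definition balanced :: "(int \<Rightarrow> 'a) set \<Rightarrow> bool" where
  "balanced X \<longleftrightarrow>
     (\<exists>B::real. B > 0 \<and> (\<forall>\<omega>\<in>lang X. \<forall>r::nat.
        real (card (follower X \<omega> r)) / real (card (lang_n X r)) \<ge> B))"

end

theory Submission
  imports Defs
begin

lemma lang_n_len: "w \<in> lang_n X n \<Longrightarrow> length w = n"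
  by (auto simp: lang_n_def window_def)

lemma lang_n_finite: "finite (lang_n (X :: (int \<Rightarrow> 'a::finite) set) n)"
proof -
  have "lang_n X n \<subseteq> {xs. set xs \<subseteq> (UNIV::'a set) \<and> length xs = n}"
    using lang_n_len by auto
  moreover have "finite {xs. set xs \<subseteq> (UNIV::'a set) \<and> length xs = n}"
    by (rule finite_lists_length_eq) simp
  ultimately show ?thesis by (rule finite_subset)
qed

lemma take_lang_n: "w \<in> lang_n X n \<Longrightarrow> k \<le> n \<Longrightarrow> take k w \<in> lang_n X k"
proof -
  assume "w \<in> lang_n X n" "k \<le> n"
  then obtain x i where x: "x \<in> X" "w = window x i n" by (auto simp: lang_n_def)
  have "take k w = window x i k" using x(2) \<open>k \<le> n\<close>
    by (simp add: window_def take_map take_upt)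
  thus ?thesis using x(1) by (auto simp: lang_n_def)
qed

lemma lang_iff: "w \<in> lang X \<longleftrightarrow> length w \<ge> 1 \<and> w \<in> lang_n X (length w)"
  using lang_n_len by (auto simp: lang_def)

lemma take_lang: "w \<in> lang X \<Longrightarrow> 1 \<le> k \<Longrightarrow> k \<le> length w \<Longrightarrow> take k w \<in> lang X"
  using take_lang_n[of w X "length w" k] by (auto simp: lang_iff)

lemma lang_n_nonempty: "x \<in> X \<Longrightarrow> lang_n X r \<noteq> {}"
  by (auto simp: lang_n_def)

definition TT :: "nat \<Rightarrow> ('a::finite) list set" where
  "TT N = {t. length t \<le> N}"

lemma TT_finite: "finite (TT N)"
proof -
  have "TT N = {xs. set xs \<subseteq> (UNIV::'a set) \<and> length xs \<le> N}" by (auto simp: TT_def)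
  moreover have "finite {xs. set xs \<subseteq> (UNIV::'a set) \<and> length xs \<le> N}"
    by (rule finite_lists_length_le) simp
  ultimately show ?thesis by simp
qed

lemma TT_card: "card (TT N :: ('a::finite) list set) \<ge> 1"
proof -
  have "[] \<in> (TT N :: 'a list set)" by (simp add: TT_def)
  thus ?thesis using TT_finite[of N] by (metis One_nat_def card_gt_0_iff empty_iff less_eq_Suc_le)
qed

theorem theorem3p7:
  fixes X :: "(int \<Rightarrow> 'a::finite) set"
  assumes "shift_space X" and "almost_specification X"
  shows "boundedly_supermultiplicative X \<and> balanced X"
proof -
  obtain N where N: "N \<ge> 1" "\<And>u v. u \<in> lang X \<Longrightarrow> v \<in> lang X \<Longrightarrow>
      \<exists>w\<in>lang X. length w \<le> N \<and> u @ w @ v \<in> lang X"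
    using assms(2) unfolding almost_specification_def by blast
  define C where "C = card (TT N :: 'a list set)"
  have C1: "C \<ge> 1" unfolding C_def by (rule TT_card)
  have bs: "boundedly_supermultiplicative X"
    unfolding boundedly_supermultiplicative_def
  proof (intro exI[of _ "real C"] conjI allI impI)
    show "1 \<le> real C" using C1 by simp
    fix m n :: nat assume m: "m \<ge> 1" and n: "n \<ge> 1"
    define h where "h = (\<lambda>(p::'a list, q::'a list). (take m p, drop (length q) (drop m (p @ q))))"
    have sub: "lang_n X m \<times> lang_n X n \<subseteq> h ` (lang_n X (m + n) \<times> TT N)"
    proof
      fix uv assume "uv \<in> lang_n X m \<times> lang_n X n"
      then obtain u v where uv: "uv = (u, v)" "u \<in> lang_n X m" "v \<in> lang_n X n" by auto
      have lu: "length u = m" "length v = n" using uv lang_n_len by auto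
      have "u \<in> lang X" "v \<in> lang X" using uv lu m n by (auto simp: lang_iff)
      then obtain w where w: "w \<in> lang X" "length w \<le> N" "u @ w @ v \<in> lang X" using N(2) by blast
      define z where "z = u @ w @ v"
      have "take (m + n) z \<in> lang_n X (m + n)"
        using take_lang_n[of z X "length z" "m+n"] w(3) lu unfolding z_def lang_iff by auto
      moreover have "drop (m + n) z \<in> TT N" using w(2) lu by (simp add: TT_def z_def)
      moreover have "h (take (m + n) z, drop (m + n) z) = (u, v)"
      proof -
        have "h (take (m + n) z, drop (m + n) z) = (take m (take (m + n) z), drop (length (drop (m + n) z)) (drop m z))"
          by (simp only: h_def split append_take_drop_id)
        also have "\<dots> = (u, v)" using lu by (simp add: z_def)
        finally show ?thesis .
      qed
      ultimately show "uv \<in> h ` (lang_n X (m + n) \<times> TT N)" using uv(1) by force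
    qed
    have "card (lang_n X m \<times> lang_n X n) \<le> card (h ` (lang_n X (m + n) \<times> TT N))"
      by (rule card_mono[OF _ sub]) (auto intro: finite_imageI lang_n_finite TT_finite)
    also have "\<dots> \<le> card (lang_n X (m + n) \<times> (TT N :: 'a list set))"
      using card_image_le[OF finite_cartesian_product[OF lang_n_finite TT_finite]] by blast
    finally have "card (lang_n X m) * card (lang_n X n) \<le> C * card (lang_n X (m + n))"
      by (simp add: card_cartesian_product C_def mult.commute)
    hence "real (card (lang_n X m) * card (lang_n X n)) \<le> real (C * card (lang_n X (m + n)))"
      by linarith
    thus "real (card (lang_n X m)) * real (card (lang_n X n)) \<le> real C * real (card (lang_n X (m + n)))"
      by simp
  qed
  have bal: "balanced X"
    unfolding balanced_def
  proof (intro exI[of _ "1 / real C"] conjI ballI allI)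
    show "0 < 1 / real C" using C1 by simp
    fix \<omega> r assume om: "\<omega> \<in> lang X"
    then obtain x where x: "x \<in> X" by (auto simp: lang_def lang_n_def)
    have ne: "card (lang_n X r) > 0"
      using lang_n_nonempty[OF x] lang_n_finite by (simp add: card_gt_0_iff)
    show "1 / real C \<le> real (card (follower X \<omega> r)) / real (card (lang_n X r))"
    proof (cases "r = 0")
      case True
      have "lang_n X 0 \<subseteq> {[]}" using lang_n_len by fastforce
      hence "card (lang_n X 0) \<le> card {[]::'a list}" by (intro card_mono) auto
      hence c1: "card (lang_n X r) = 1" using ne True by simp
      have "follower X \<omega> 0 = {[]}" using om by (auto simp: follower_def)
      hence "card (follower X \<omega> r) = 1" using True by simp
      thus ?thesis using c1 C1 by simp
    next
      case False
      define g where "g = (\<lambda>(u::'a list, t::'a list). drop (length t) (u @ t))"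
      have sub: "lang_n X r \<subseteq> g ` (follower X \<omega> r \<times> TT N)"
      proof
        fix v assume v: "v \<in> lang_n X r"
        have lv: "length v = r" using v lang_n_len by auto
        have "v \<in> lang X" using v lv False by (auto simp: lang_iff)
        then obtain w where w: "w \<in> lang X" "length w \<le> N" "\<omega> @ w @ v \<in> lang X"
          using N(2) om by blast
        define u where "u = take r (w @ v)"
        define t where "t = drop r (w @ v)"
        have lt: "length t = length w" using lv by (simp add: t_def)
        have "take (length \<omega> + r) (\<omega> @ w @ v) \<in> lang X"
          by (rule take_lang[OF w(3)]) (use False lv in auto)
        hence "u \<in> follower X \<omega> r" using lv by (simp add: follower_def u_def)
        moreover have "t \<in> TT N" using lt w(2) by (simp add: TT_def)
        moreover have "g (u, t) = v"
        proof -
          have "u @ t = w @ v" unfolding u_def t_def by (rule append_take_drop_id)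
          hence "g (u, t) = drop (length w) (w @ v)" using lt unfolding g_def by (simp del: drop_append)
          thus ?thesis by simp
        qed
        ultimately show "v \<in> g ` (follower X \<omega> r \<times> TT N)" by force
      qed
      have finF: "finite (follower X \<omega> r)"
      proof -
        have "follower X \<omega> r \<subseteq> {xs. set xs \<subseteq> (UNIV::'a set) \<and> length xs = r}"
          by (auto simp: follower_def)
        moreover have "finite {xs. set xs \<subseteq> (UNIV::'a set) \<and> length xs = r}"
          by (rule finite_lists_length_eq) simp
        ultimately show ?thesis by (rule finite_subset)
      qed
      have "card (lang_n X r) \<le> card (g ` (follower X \<omega> r \<times> TT N))"
        by (rule card_mono[OF _ sub]) (auto intro: finite_imageI finF TT_finite)
      also have "\<dots> \<le> card (follower X \<omega> r \<times> (TT N :: 'a list set))"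
        using card_image_le[OF finite_cartesian_product[OF finF TT_finite]] by blast
      finally have "card (lang_n X r) \<le> card (follower X \<omega> r) * C"
        by (simp add: card_cartesian_product C_def mult.commute)
      hence le: "real (card (lang_n X r)) \<le> real (card (follower X \<omega> r)) * real C"
        by (metis of_nat_le_iff of_nat_mult)
      show ?thesis using le ne C1 by (simp add: field_simps)
    qed
  qed
  show ?thesis using bs bal by simp
qed

end
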